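(* $\mathcal{L}_{\mathsf{SAFA}}\subsetneq\mathcal{L}_{\mathsf{CMA}}$: every data language accepted by a SAFA is accepted by some class memory automaton, and some data language accepted by a class memory automaton is accepted by no SAFA.
   Context: $D$ is a fixed countably infinite set of data values; for a finite alphabet $\Sigma$, data languages are subsets of $(\Sigma\times D)^*$. A set augmented finite automaton (SAFA) is a tuple $M=(Q,\Sigma\times D,q_0,F,H,\delta)$: $Q$ finite set of states, $q_0\in Q$ initial, $F\subseteq Q$ final, $H=\{h_1,\dots,h_m\}$ a finite collection of (names of) sets of data values, $\delta\subseteq Q\times\Sigma\times C\times OP\times Q$ with $C=\{p(h_i),\,!p(h_i)\}$, $OP=\{-\}\cup\{\mathsf{ins}(h_i)\}$. Configurations are $(q,\langle S_1,\dots,S_m\rangle)$, $S_i\subseteq D$ finite; initially state $q_0$ and all sets empty. On reading $(a,d)$, a transition $(q,a,\alpha,op,q')$ from the current state may be taken if $\alpha=p(h_i)$ and $d\in S_i$, or $\alpha=\,!p(h_i)$ and $d\notin S_i$; then the state becomes $q'$ and if $op=\mathsf{ins}(h_j)$, $d$ is added to $S_j$. A word is accepted if some run reads it entirely and ends in $F$; $\mathcal{L}_{\mathsf{SAFA}}$ is the class of languages accepted by SAFA. A class memory automaton (CMA) is a tuple $(Q,\Sigma,\delta,q_0,F_\ell,F_g)$ with finite state set $Q$, initial state $q_0$, accepting sets $F_g\subseteq F_\ell\subseteq Q$, and $\delta\subseteq Q\times\Sigma\times(Q\cup\{\bot\})\times Q$. The automaton records for each data value $d$ the state $f(d)$ it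 entered the last time it read a position carrying $d$ ($f(d)=\bot$ if $d$ has not been read). On reading $(a,d)$ in state $q$ it may take a transition $(q,a,f(d),q')\in\delta$, after which the state is $q'$ and $f(d):=q'$. A word is accepted if some run reads it entirely, ends in a state of $F_g$, and $f(d)\in F_\ell$ for every data value $d$ occurring in the word. $\mathcal{L}_{\mathsf{CMA}}$ is the class of languages accepted by CMA. *)

theory Defs
  imports Main
begin

text \<open>Data values D: modelled by the countably infinite type nat.
  Letters of the finite alphabet Sigma and automaton states are also
  encoded as natural numbers (any finite alphabet / state set can be renamed).
  A data word is a list of (letter, data value) pairs.\<close>

type_synonym dword = "(nat \<times> nat) list"

datatype safa_cond = InSet nat | NotInSet nat
datatype safa_op = NoOp | Ins nat

record safa =
  sQ :: "nat set"
  sq0 :: nat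
  sF :: "nat set"
  sm :: nat                                         (* sets h_0 .. h_(m-1) *)
  sdelta :: "(nat \<times> nat \<times> safa_cond \<times> safa_op \<times> nat) set"

definition safa_wf :: "nat set \<Rightarrow> safa \<Rightarrow> bool" where
  "safa_wf \<Sigma> M \<longleftrightarrow> finite (sQ M) \<and> sq0 M \<in> sQ M \<and> sF M \<subseteq> sQ M \<and>
     (\<forall>(q, a, c, op, q') \<in> sdelta M. q \<in> sQ M \<and> a \<in> \<Sigma> \<and> q' \<in> sQ M \<and>
        (case c of InSet i \<Rightarrow> i < sm M | NotInSet i \<Rightarrow> i < sm M) \<and>
        (case op of NoOp \<Rightarrow> True | Ins j \<Rightarrow> j < sm M))"

fun cond_sat :: "safa_cond \<Rightarrow> nat \<Rightarrow> (nat \<Rightarrow> nat set) \<Rightarrow> bool" where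
  "cond_sat (InSet i) d S \<longleftrightarrow> d \<in> S i"
| "cond_sat (NotInSet i) d S \<longleftrightarrow> d \<notin> S i"

fun op_apply :: "safa_op \<Rightarrow> nat \<Rightarrow> (nat \<Rightarrow> nat set) \<Rightarrow> (nat \<Rightarrow> nat set)" where
  "op_apply NoOp d S = S"
| "op_apply (Ins j) d S = S(j := insert d (S j))"

inductive safa_reach :: "safa \<Rightarrow> dword \<Rightarrow> nat \<Rightarrow> (nat \<Rightarrow> nat set) \<Rightarrow> bool"
  for M :: safa where
  init: "safa_reach M [] (sq0 M) (\<lambda>_. {})"
| step: "safa_reach M w q S \<Longrightarrow> (q, a, c, op, q') \<in> sdelta M \<Longrightarrow> cond_sat c d S \<Longrightarrow>
         safa_reach M (w @ [(a, d)]) q' (op_apply op d S)"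

definition safa_lang :: "safa \<Rightarrow> dword set" where
  "safa_lang M = {w. \<exists>q S. safa_reach M w q S \<and> q \<in> sF M}"

record cma =
  cQ :: "nat set"
  cq0 :: nat
  cFl :: "nat set"
  cFg :: "nat set"
  cdelta :: "(nat \<times> nat \<times> nat option \<times> nat) set"   (* None encodes \<bottom> *)

definition cma_wf :: "nat set \<Rightarrow> cma \<Rightarrow> bool" where
  "cma_wf \<Sigma> A \<longleftrightarrow> finite (cQ A) \<and> cq0 A \<in> cQ A \<and> cFg A \<subseteq> cFl A \<and> cFl A \<subseteq> cQ A \<and>
     (\<forall>(q, a, p, q') \<in> cdelta A. q \<in> cQ A \<and> a \<in> \<Sigma> \<and> q' \<in> cQ A \<and> set_option p \<subseteq> cQ A)"

inductive cma_reach :: "cma \<Rightarrow> dword \<Rightarrow> nat \<Rightarrow> (nat \<Rightarrow> nat option) \<Rightarrow> bool"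
  for A :: cma where
  init: "cma_reach A [] (cq0 A) (\<lambda>_. None)"
| step: "cma_reach A w q f \<Longrightarrow> (q, a, f d, q') \<in> cdelta A \<Longrightarrow>
         cma_reach A (w @ [(a, d)]) q' (f(d := Some q'))"

definition cma_lang :: "cma \<Rightarrow> dword set" where
  "cma_lang A = {w. \<exists>q f. cma_reach A w q f \<and> q \<in> cFg A \<and>
                         (\<forall>d \<in> snd ` set w. \<exists>p \<in> cFl A. f d = Some p)}"

end

theory Submission
  imports Defs "HOL-Library.Nat_Bijection" "HOL-Library.Multiset"
begin


definition enc :: "nat \<Rightarrow> nat set \<Rightarrow> nat" where
  "enc q T = prod_encode (q, set_encode T)"

lemma enc_eq: "finite T \<Longrightarrow> finite T' \<Longrightarrow> enc q T = enc q' T' \<longleftrightarrow> q = q' \<and> T = T'"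
  by (auto simp: enc_def set_encode_eq)

fun condT :: "safa_cond \<Rightarrow> nat set \<Rightarrow> bool" where
  "condT (InSet i) T \<longleftrightarrow> i \<in> T"
| "condT (NotInSet i) T \<longleftrightarrow> i \<notin> T"

fun opT :: "safa_op \<Rightarrow> nat set \<Rightarrow> nat set" where
  "opT NoOp T = T"
| "opT (Ins j) T = insert j T"

lemma cond_sat_condT: "cond_sat c d S \<longleftrightarrow> condT c {i. d \<in> S i}"
  by (cases c) auto

lemma op_apply_vec: "{i. d \<in> op_apply op d S i} = opT op {i. d \<in> S i}"
  by (cases op) auto

lemma op_apply_other: "d' \<noteq> d \<Longrightarrow> {i. d' \<in> op_apply op d S i} = {i. d' \<in> S i}"
  by (cases op) auto

definition toCMA :: "safa \<Rightarrow> cma" where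
  "toCMA M = \<lparr> cQ = {enc q T | q T. q \<in> sQ M \<and> T \<subseteq> {..<sm M}},
     cq0 = enc (sq0 M) {},
     cFl = {enc q T | q T. q \<in> sQ M \<and> T \<subseteq> {..<sm M}},
     cFg = {enc q T | q T. q \<in> sF M \<and> T \<subseteq> {..<sm M}},
     cdelta = {(enc q T, a, None, enc q' (opT op {})) | q T a c op q'.
                 (q, a, c, op, q') \<in> sdelta M \<and> T \<subseteq> {..<sm M} \<and> condT c {}}
            \<union> {(enc q T, a, Some (enc q1 T1), enc q' (opT op T1)) | q T a c op q' q1 T1.
                 (q, a, c, op, q') \<in> sdelta M \<and> T \<subseteq> {..<sm M} \<and> q1 \<in> sQ M \<and>
                 T1 \<subseteq> {..<sm M} \<and> condT c T1} \<rparr>"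

definition Inv :: "safa \<Rightarrow> nat \<Rightarrow> nat set \<Rightarrow> (nat \<Rightarrow> nat set) \<Rightarrow> (nat \<Rightarrow> nat option) \<Rightarrow> bool" where
  "Inv M q T S f \<longleftrightarrow> q \<in> sQ M \<and> T \<subseteq> {..<sm M} \<and>
     (\<forall>d. case f d of None \<Rightarrow> {i. d \<in> S i} = {}
        | Some p \<Rightarrow> (\<exists>q1 T1. p = enc q1 T1 \<and> q1 \<in> sQ M \<and> T1 \<subseteq> {..<sm M} \<and> {i. d \<in> S i} = T1))"

lemma opT_sub: "safa_wf \<Sigma> M \<Longrightarrow> (q, a, c, op, q') \<in> sdelta M \<Longrightarrow> T \<subseteq> {..<sm M} \<Longrightarrow> opT op T \<subseteq> {..<sm M}"
  unfolding safa_wf_def by (cases op) fastforce+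

lemma wf_q': "safa_wf \<Sigma> M \<Longrightarrow> (q, a, c, op, q') \<in> sdelta M \<Longrightarrow> q \<in> sQ M \<and> q' \<in> sQ M \<and> a \<in> \<Sigma>"
  unfolding safa_wf_def by fastforce

lemma finite_sub: "T \<subseteq> {..<(m::nat)} \<Longrightarrow> finite T"
  using finite_subset by blast

lemma Inv_step:
  assumes wf: "safa_wf \<Sigma> M" and I: "Inv M q T S f" and tr: "(q, a, c, op, q') \<in> sdelta M"
    and V: "{i. d \<in> S i} = T1" and T1: "T1 \<subseteq> {..<sm M}"
  shows "Inv M q' (opT op T1) (op_apply op d S) (f(d := Some (enc q' (opT op T1))))"
  unfolding Inv_def
proof (intro conjI allI)
  show "q' \<in> sQ M" using wf_q'[OF wf tr] by simp
  show "opT op T1 \<subseteq> {..<sm M}" using opT_sub[OF wf tr T1] .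
  fix d'
  show "case (f(d := Some (enc q' (opT op T1)))) d' of None \<Rightarrow> {i. d' \<in> op_apply op d S i} = {}
        | Some p \<Rightarrow> (\<exists>q1 T1a. p = enc q1 T1a \<and> q1 \<in> sQ M \<and> T1a \<subseteq> {..<sm M} \<and> {i. d' \<in> op_apply op d S i} = T1a)"
  proof (cases "d' = d")
    case True
    then show ?thesis using wf_q'[OF wf tr] opT_sub[OF wf tr T1] op_apply_vec[of d op S] V by auto
  next
    case False
    have e: "{i. d' \<in> op_apply op d S i} = {i. d' \<in> S i}" using op_apply_other[OF False] .
    show ?thesis unfolding e fun_upd_other[OF False] using I unfolding Inv_def by blast
  qed
qed

lemma safa_to_cma:
  assumes wf: "safa_wf \<Sigma> M"
  shows "safa_reach M w q S \<Longrightarrow> \<exists>T f. cma_reach (toCMA M) w (enc q T) f \<and> Inv M q T S f"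
proof (induction rule: safa_reach.induct)
  case init
  have "cma_reach (toCMA M) [] (enc (sq0 M) {}) (\<lambda>_. None)"
    using cma_reach.init[of "toCMA M"] by (simp add: toCMA_def)
  moreover have "Inv M (sq0 M) {} (\<lambda>_. {}) (\<lambda>_. None)"
    using wf by (simp add: Inv_def safa_wf_def)
  ultimately show ?case by blast
next
  case (step w q S a c op q' d)
  then obtain T f where r: "cma_reach (toCMA M) w (enc q T) f" and I: "Inv M q T S f" by blast
  show ?case
  proof (cases "f d")
    case None
    with I have V: "{i. d \<in> S i} = {}" by (auto simp: Inv_def split: option.splits dest: spec[of _ d])
    have cT: "condT c {}" using step.hyps(3) V cond_sat_condT by metis
    have T: "T \<subseteq> {..<sm M}" using I by (simp add: Inv_def)
    have "(enc q T, a, f d, enc q' (opT op {})) \<in> cdelta (toCMA M)"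
      using None step.hyps(2) T cT by (simp add: toCMA_def; blast)
    from cma_reach.step[OF r this]
    have "cma_reach (toCMA M) (w @ [(a, d)]) (enc q' (opT op {})) (f(d := Some (enc q' (opT op {}))))" .
    moreover have "Inv M q' (opT op {}) (op_apply op d S) (f(d := Some (enc q' (opT op {}))))"
      using Inv_step[OF wf I step.hyps(2) V] by simp
    ultimately show ?thesis by blast
  next
    case (Some p)
    have "case f d of None \<Rightarrow> {i. d \<in> S i} = {}
        | Some p \<Rightarrow> (\<exists>q1 T1. p = enc q1 T1 \<and> q1 \<in> sQ M \<and> T1 \<subseteq> {..<sm M} \<and> {i. d \<in> S i} = T1)"
      using I unfolding Inv_def by blast
    then have "\<exists>q1 T1. p = enc q1 T1 \<and> q1 \<in> sQ M \<and> T1 \<subseteq> {..<sm M} \<and> {i. d \<in> S i} = T1"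
      using Some by simp
    then obtain q1 T1 where p: "p = enc q1 T1" "q1 \<in> sQ M" "T1 \<subseteq> {..<sm M}" and V: "{i. d \<in> S i} = T1"
      by blast
    have cT: "condT c T1" using step.hyps(3) V cond_sat_condT by metis
    have T: "T \<subseteq> {..<sm M}" using I by (simp add: Inv_def)
    have "(enc q T, a, f d, enc q' (opT op T1)) \<in> cdelta (toCMA M)"
      using Some p step.hyps(2) T cT by (simp add: toCMA_def; blast)
    from cma_reach.step[OF r this]
    have "cma_reach (toCMA M) (w @ [(a, d)]) (enc q' (opT op T1)) (f(d := Some (enc q' (opT op T1))))" .
    moreover have "Inv M q' (opT op T1) (op_apply op d S) (f(d := Some (enc q' (opT op T1))))"
      using Inv_step[OF wf I step.hyps(2) V p(3)] .
    ultimately show ?thesis by blast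
  qed
qed

lemma cma_to_safa:
  assumes wf: "safa_wf \<Sigma> M"
  shows "cma_reach (toCMA M) w p f \<Longrightarrow> \<exists>q T S. p = enc q T \<and> safa_reach M w q S \<and> Inv M q T S f"
proof (induction rule: cma_reach.induct)
  case init
  have "Inv M (sq0 M) {} (\<lambda>_. {}) (\<lambda>_. None)"
    using wf by (simp add: Inv_def safa_wf_def)
  then show ?case using safa_reach.init[of M] by (auto simp: toCMA_def)
next
  case (step w p f a d p')
  then obtain q T S where p: "p = enc q T" and r: "safa_reach M w q S" and I: "Inv M q T S f" by blast
  have fT: "finite T" using I finite_sub by (auto simp: Inv_def)
  from step.hyps(2) show ?case
    unfolding toCMA_def cma.simps
  proof (elim UnE CollectE exE conjE)
    fix q0 T0 a0 c op q'
    assume h: "(p, a, f d, p') = (enc q0 T0, a0, None, enc q' (opT op {}))"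
      "(q0, a0, c, op, q') \<in> sdelta M" "T0 \<subseteq> {..<sm M}" "condT c {}"
    have "enc q T = enc q0 T0" using h(1) p by simp
    then have "q0 = q" using enc_eq[OF fT finite_sub[OF h(3)]] by simp
    have fd: "f d = None" and a0: "a0 = a" using h(1) by auto
    with I have V: "{i. d \<in> S i} = {}" by (auto simp: Inv_def split: option.splits dest: spec[of _ d])
    have tr: "(q, a, c, op, q') \<in> sdelta M" using h(2) `q0 = q` a0 by simp
    have cs: "cond_sat c d S" using h(4) V cond_sat_condT by metis
    have pe: "p' = enc q' (opT op {})" using h(1) by simp
    from safa_reach.step[OF r tr cs] Inv_step[OF wf I tr V]
    show ?thesis unfolding pe by blast
  next
    fix q0 T0 a0 c op q' q1 T1
    assume h: "(p, a, f d, p') = (enc q0 T0, a0, Some (enc q1 T1), enc q' (opT op T1))"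
      "(q0, a0, c, op, q') \<in> sdelta M" "T0 \<subseteq> {..<sm M}" "q1 \<in> sQ M" "T1 \<subseteq> {..<sm M}" "condT c T1"
    have "enc q T = enc q0 T0" using h(1) p by simp
    then have "q0 = q" using enc_eq[OF fT finite_sub[OF h(3)]] by simp
    have fd: "f d = Some (enc q1 T1)" and a0: "a0 = a" using h(1) by auto
    have "case f d of None \<Rightarrow> {i. d \<in> S i} = {}
        | Some p \<Rightarrow> (\<exists>q1 T1. p = enc q1 T1 \<and> q1 \<in> sQ M \<and> T1 \<subseteq> {..<sm M} \<and> {i. d \<in> S i} = T1)"
      using I unfolding Inv_def by blast
    then have "\<exists>q2 T2. enc q1 T1 = enc q2 T2 \<and> q2 \<in> sQ M \<and> T2 \<subseteq> {..<sm M} \<and> {i. d \<in> S i} = T2"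
      using fd by simp
    then obtain q2 T2 where "enc q1 T1 = enc q2 T2" "T2 \<subseteq> {..<sm M}" and V2: "{i. d \<in> S i} = T2"
      by blast
    then have V: "{i. d \<in> S i} = T1" using enc_eq[OF finite_sub[OF h(5)] finite_sub] by metis
    have tr: "(q, a, c, op, q') \<in> sdelta M" using h(2) `q0 = q` a0 by simp
    have cs: "cond_sat c d S" using h(6) V cond_sat_condT by metis
    have pe: "p' = enc q' (opT op T1)" using h(1) by simp
    from safa_reach.step[OF r tr cs] Inv_step[OF wf I tr V h(5)]
    show ?thesis unfolding pe by blast
  qed
qed

lemma cma_dom: "cma_reach A w p f \<Longrightarrow> d \<in> snd ` set w \<Longrightarrow> f d \<noteq> None"
  by (induction rule: cma_reach.induct) auto

lemma part1:
  assumes "finite \<Sigma>" "safa_wf \<Sigma> M"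
  shows "\<exists>A. cma_wf \<Sigma> A \<and> cma_lang A = safa_lang M"
proof (intro exI conjI)
  have fin: "finite {enc q T | q T. q \<in> sQ M \<and> T \<subseteq> {..<sm M}}"
  proof -
    have "{enc q T | q T. q \<in> sQ M \<and> T \<subseteq> {..<sm M}} = (\<lambda>(q, T). enc q T) ` (sQ M \<times> Pow {..<sm M})"
      by auto
    then show ?thesis using assms(2) by (simp add: safa_wf_def)
  qed
  show "cma_wf \<Sigma> (toCMA M)"
    unfolding cma_wf_def
  proof (intro conjI)
    show "finite (cQ (toCMA M))" using fin by (simp add: toCMA_def)
    show "cq0 (toCMA M) \<in> cQ (toCMA M)" using assms(2) by (auto simp: toCMA_def safa_wf_def)
    show "cFg (toCMA M) \<subseteq> cFl (toCMA M)" using assms(2) by (auto simp: toCMA_def safa_wf_def)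
    show "cFl (toCMA M) \<subseteq> cQ (toCMA M)" by (simp add: toCMA_def)
    show "\<forall>(q, a, p, q')\<in>cdelta (toCMA M). q \<in> cQ (toCMA M) \<and> a \<in> \<Sigma> \<and> q' \<in> cQ (toCMA M) \<and> set_option p \<subseteq> cQ (toCMA M)"
    proof (intro ballI)
      fix x assume x: "x \<in> cdelta (toCMA M)"
      have encin: "enc q T \<in> cQ (toCMA M)" if "q \<in> sQ M" "T \<subseteq> {..<sm M}" for q T
        using that unfolding toCMA_def cma.simps by blast
      from x[unfolded toCMA_def cma.simps] show "case x of (q, a, p, q') \<Rightarrow> q \<in> cQ (toCMA M) \<and> a \<in> \<Sigma> \<and> q' \<in> cQ (toCMA M) \<and> set_option p \<subseteq> cQ (toCMA M)"
      proof (elim UnE CollectE exE conjE)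
        fix q T a c op q'
        assume h: "x = (enc q T, a, None, enc q' (opT op {}))" "(q, a, c, op, q') \<in> sdelta M"
          "T \<subseteq> {..<sm M}" "condT c {}"
        have "enc q T \<in> cQ (toCMA M)" "enc q' (opT op {}) \<in> cQ (toCMA M)" "a \<in> \<Sigma>"
          using encin wf_q'[OF assms(2) h(2)] opT_sub[OF assms(2) h(2)] h(3) by auto
        then show "case x of (qa, a, p, q'a) \<Rightarrow> qa \<in> cQ (toCMA M) \<and> a \<in> \<Sigma> \<and> q'a \<in> cQ (toCMA M) \<and> set_option p \<subseteq> cQ (toCMA M)"
          using h(1) by simp
      next
        fix q T a c op q' q1 T1
        assume h: "x = (enc q T, a, Some (enc q1 T1), enc q' (opT op T1))" "(q, a, c, op, q') \<in> sdelta M"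
          "T \<subseteq> {..<sm M}" "q1 \<in> sQ M" "T1 \<subseteq> {..<sm M}" "condT c T1"
        have "enc q T \<in> cQ (toCMA M)" "enc q' (opT op T1) \<in> cQ (toCMA M)" "a \<in> \<Sigma>" "enc q1 T1 \<in> cQ (toCMA M)"
          using encin wf_q'[OF assms(2) h(2)] opT_sub[OF assms(2) h(2) h(5)] h(3,4,5) by auto
        then show "case x of (qa, a, p, q'a) \<Rightarrow> qa \<in> cQ (toCMA M) \<and> a \<in> \<Sigma> \<and> q'a \<in> cQ (toCMA M) \<and> set_option p \<subseteq> cQ (toCMA M)"
          using h(1) by simp
      qed
    qed
  qed
  show "cma_lang (toCMA M) = safa_lang M"
  proof
    show "cma_lang (toCMA M) \<subseteq> safa_lang M"
    proof
      fix w assume "w \<in> cma_lang (toCMA M)"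
      then obtain p f where r: "cma_reach (toCMA M) w p f" and pF: "p \<in> cFg (toCMA M)"
        unfolding cma_lang_def by blast
      from cma_to_safa[OF assms(2) r] obtain q T S where e1: "p = enc q T" and rs: "safa_reach M w q S"
        and I: "Inv M q T S f" by blast
      from pF obtain q' T' where e2: "p = enc q' T'" and qF: "q' \<in> sF M" and T': "T' \<subseteq> {..<sm M}"
        unfolding toCMA_def cma.simps by blast
      have T: "T \<subseteq> {..<sm M}" using I by (simp add: Inv_def)
      have "enc q T = enc q' T'" using e1 e2 by simp
      then have "q = q'" using enc_eq[OF finite_sub[OF T] finite_sub[OF T']] by blast
      then show "w \<in> safa_lang M" unfolding safa_lang_def using rs qF by blast
    qed
    show "safa_lang M \<subseteq> cma_lang (toCMA M)"
    proof
      fix w assume "w \<in> safa_lang M"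
      then obtain q S where r: "safa_reach M w q S" and qF: "q \<in> sF M" unfolding safa_lang_def by blast
      from safa_to_cma[OF assms(2) r] obtain T f where r2: "cma_reach (toCMA M) w (enc q T) f"
        and I: "Inv M q T S f" by blast
      have "enc q T \<in> cFg (toCMA M)" using I qF by (auto simp: toCMA_def Inv_def)
      moreover have "\<forall>d \<in> snd ` set w. \<exists>p \<in> cFl (toCMA M). f d = Some p"
      proof
        fix d assume "d \<in> snd ` set w"
        with cma_dom[OF r2] obtain p where fd: "f d = Some p" by blast
        have "case f d of None \<Rightarrow> {i. d \<in> S i} = {}
            | Some p \<Rightarrow> (\<exists>q1 T1. p = enc q1 T1 \<and> q1 \<in> sQ M \<and> T1 \<subseteq> {..<sm M} \<and> {i. d \<in> S i} = T1)"
          using I unfolding Inv_def by blast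
        then have "\<exists>q1 T1. p = enc q1 T1 \<and> q1 \<in> sQ M \<and> T1 \<subseteq> {..<sm M}"
          using fd by auto
        then have "p \<in> cFl (toCMA M)" unfolding toCMA_def cma.simps by blast
        with fd show "\<exists>p \<in> cFl (toCMA M). f d = Some p" by blast
      qed
      ultimately show "w \<in> cma_lang (toCMA M)" using r2 unfolding cma_lang_def by blast
    qed
  qed
qed



inductive srun :: "safa \<Rightarrow> nat \<Rightarrow> (nat \<Rightarrow> nat set) \<Rightarrow> dword \<Rightarrow> nat \<Rightarrow> (nat \<Rightarrow> nat set) \<Rightarrow> bool"
  for M p S where
  sinit: "srun M p S [] p S"
| sstep: "srun M p S w q T \<Longrightarrow> (q, a, c, op, q') \<in> sdelta M \<Longrightarrow> cond_sat c d T \<Longrightarrow>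
         srun M p S (w @ [(a, d)]) q' (op_apply op d T)"

lemma reach_srun: "safa_reach M w q S \<Longrightarrow> srun M (sq0 M) (\<lambda>_. {}) w q S"
  by (induction rule: safa_reach.induct) (auto intro: srun.intros)

lemma srun_reach: "srun M (sq0 M) (\<lambda>_. {}) w q S \<Longrightarrow> safa_reach M w q S"
  by (induction rule: srun.induct) (auto intro: safa_reach.intros)

lemma srun_app: "srun M p1 S1 v p' S' \<Longrightarrow> srun M p S u p1 S1 \<Longrightarrow> srun M p S (u @ v) p' S'"
proof (induction rule: srun.induct)
  case sinit then show ?case by simp
next
  case (sstep w q T a c op q' d)
  then show ?case using srun.sstep[of M p S "u @ w"] by simp
qed

lemma srun_snocE:
  assumes "srun M p S (w @ [x]) p' S'"
  shows "\<exists>q T a c op d. x = (a, d) \<and> srun M p S w q T \<and> (q, a, c, op, p') \<in> sdelta M \<and>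
           cond_sat c d T \<and> S' = op_apply op d T"
  using assms by (cases rule: srun.cases) auto

lemma srun_split: "srun M p S (u @ v) p' S' \<Longrightarrow> \<exists>p1 S1. srun M p S u p1 S1 \<and> srun M p1 S1 v p' S'"
proof (induction v arbitrary: p' S' rule: rev_induct)
  case Nil then show ?case by (auto intro: srun.intros)
next
  case (snoc x v)
  from srun_snocE[of M p S "u @ v" x p' S'] snoc.prems obtain q T a c op d where
    h: "x = (a, d)" "srun M p S (u @ v) q T" "(q, a, c, op, p') \<in> sdelta M"
       "cond_sat c d T" "S' = op_apply op d T" by auto
  from snoc.IH[OF h(2)] obtain p1 S1 where "srun M p S u p1 S1" "srun M p1 S1 v q T" by blast
  then show ?case using srun.sstep[OF _ h(3) h(4)] h by blast
qed

lemma op_apply_mono: "S t \<subseteq> op_apply op d S t"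
  by (cases op) auto

lemma srun_mono: "srun M p S w p' S' \<Longrightarrow> S t \<subseteq> S' t"
  by (induction rule: srun.induct) (auto dest: subsetD intro: op_apply_mono[THEN subsetD])

lemma srun_grow: assumes wf: "safa_wf \<Sigma> M" shows "srun M p S w p' S' \<Longrightarrow> x \<in> S' t \<Longrightarrow>
    x \<in> S t \<or> (t < sm M \<and> x \<in> snd ` set w)"
proof (induction rule: srun.induct)
  case sinit then show ?case by simp
next
  case (sstep w q T a c op q' d)
  show ?case
  proof (cases op)
    case NoOp then show ?thesis using sstep by auto
  next
    case (Ins j)
    have "j < sm M" using wf sstep.hyps(2) Ins unfolding safa_wf_def by fastforce
    then show ?thesis using sstep Ins by (auto split: if_splits)
  qed
qed

lemma cond_sat_vec: "(\<forall>t. i \<in> S t \<longleftrightarrow> j \<in> S t) \<Longrightarrow> cond_sat c i S \<Longrightarrow> cond_sat c j S"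
  by (cases c) auto

lemma op_apply_fix: "(\<forall>t. i \<in> S t \<longleftrightarrow> j \<in> S t) \<Longrightarrow> op_apply op i S = S \<Longrightarrow> op_apply op j S = S"
proof (cases op)
  case (Ins t)
  assume a: "\<forall>t. i \<in> S t \<longleftrightarrow> j \<in> S t" "op_apply op i S = S"
  then have "i \<in> S t" using Ins by (metis fun_upd_same insertI1 op_apply.simps(2))
  then show ?thesis using a Ins by (simp add: insert_absorb)
qed simp

lemma srun_replace:
  "srun M p S v p' S' \<Longrightarrow> (\<forall>t. S' t \<subseteq> S t) \<Longrightarrow> k < length v \<Longrightarrow> (\<forall>t. i \<in> S t \<longleftrightarrow> j \<in> S t) \<Longrightarrow>
   snd (v ! k) = i \<Longrightarrow> srun M p S (v[k := (fst (v ! k), j)]) p' S'"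
proof (induction rule: srun.induct)
  case sinit then show ?case by simp
next
  case (sstep w q T a c op q' d)
  have TS: "T = S"
  proof
    fix t
    show "T t = S t" using srun_mono[OF sstep.hyps(1), of t] op_apply_mono[of T t op d] sstep.prems(1) by blast
  qed
  show ?case
  proof (cases "k < length w")
    case True
    have "srun M p S (w[k := (fst (w ! k), j)]) q T"
      using sstep.IH sstep.prems True TS by (simp add: nth_append)
    from srun.sstep[OF this sstep.hyps(2,3)] True show ?thesis
      by (simp add: nth_append list_update_append)
  next
    case False
    then have k: "k = length w" using sstep.prems(2) by simp
    then have di: "d = i" using sstep.prems(4) by simp
    have fix1: "op_apply op d S = S"
    proof
      fix t show "op_apply op d S t = S t"
        using op_apply_mono[of S t op d] sstep.prems(1) TS by blast
    qed
    have cs: "cond_sat c j T" using cond_sat_vec[OF sstep.prems(3)] sstep.hyps(3) TS di by simp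
    have "op_apply op j T = op_apply op d T"
      using op_apply_fix[OF sstep.prems(3)] fix1 TS di by simp
    with srun.sstep[OF sstep.hyps(1,2) cs] k show ?thesis
      by (simp add: list_update_append)
  qed
qed


definition rd :: "nat \<Rightarrow> dword" where "rd N = map (\<lambda>i. (0, i)) [0..<N]"
definition rdp :: "nat \<Rightarrow> nat \<Rightarrow> dword" where "rdp N k = concat (replicate k (rd N))"
definition cnt :: "nat \<Rightarrow> dword \<Rightarrow> nat" where "cnt d w = count (mset (map snd w)) d"
definition Phi :: "nat \<Rightarrow> nat \<Rightarrow> (nat \<Rightarrow> nat set) \<Rightarrow> nat" where
  "Phi m N S = (\<Sum>t<m. card (S t \<inter> {..<N}))"

lemma cnt_app[simp]: "cnt d (u @ v) = cnt d u + cnt d v" by (simp add: cnt_def)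
lemma cnt_nil[simp]: "cnt d [] = 0" by (simp add: cnt_def)
lemma cnt_rd: "cnt d (rd N) = (if d < N then 1 else 0)"
  by (simp add: cnt_def rd_def comp_def)
lemma cnt_rdp: "cnt d (rdp N k) = (if d < N then k else 0)"
  by (induction k) (simp_all add: rdp_def cnt_rd)
lemma rdp_Suc: "rdp N (Suc k) = rd N @ rdp N k" by (simp add: rdp_def)
lemma len_rd[simp]: "length (rd N) = N" by (simp add: rd_def)
lemma nth_rd: "i < N \<Longrightarrow> rd N ! i = (0, i)" by (simp add: rd_def)
lemma set_rd: "snd ` set (rd N) = {..<N}" by (auto simp: rd_def image_iff)
lemma cnt_rd_upd: "i < N \<Longrightarrow> i \<noteq> j \<Longrightarrow> cnt i ((rd N)[i := (0, j)]) = 0"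
proof -
  assume a: "i < N" "i \<noteq> j"
  have "map snd ((rd N)[i := (0, j)]) = [0..<N][i := j]"
    by (simp add: rd_def map_update comp_def)
  then show ?thesis using a by (simp add: cnt_def mset_update)
qed
lemma cnt_pos: "cnt d w > 0 \<Longrightarrow> d \<in> snd ` set w"
  by (simp add: cnt_def)

lemma Phi_mono: "(\<And>t. S t \<subseteq> S' t) \<Longrightarrow> Phi m N S \<le> Phi m N S'"
  unfolding Phi_def by (intro sum_mono card_mono) auto

lemma Phi_bound: "Phi m N S \<le> m * N"
proof -
  have "Phi m N S \<le> (\<Sum>t<m. N)" unfolding Phi_def
    by (intro sum_mono) (metis card_lessThan card_mono finite_lessThan inf_le2)
  then show ?thesis by simp
qed

lemma Phi_eq:
  assumes wf: "safa_wf \<Sigma> M" and r: "srun M p S v p1 S1" and v: "snd ` set v \<subseteq> {..<N}"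
    and le: "Phi (sm M) N S1 \<le> Phi (sm M) N S"
  shows "S1 = S"
proof
  fix t
  have mono: "\<And>t. S t \<subseteq> S1 t" using srun_mono[OF r] .
  have ceq: "card (S t \<inter> {..<N}) = card (S1 t \<inter> {..<N})" if "t < sm M" for t
  proof (rule ccontr)
    assume ne: "card (S t \<inter> {..<N}) \<noteq> card (S1 t \<inter> {..<N})"
    have "card (S t \<inter> {..<N}) \<le> card (S1 t \<inter> {..<N})"
      using mono by (intro card_mono) auto
    with ne have "card (S t \<inter> {..<N}) < card (S1 t \<inter> {..<N})" by simp
    then have "Phi (sm M) N S < Phi (sm M) N S1" unfolding Phi_def
      using that mono by (intro sum_strict_mono_ex1) (auto intro!: card_mono)
    with le show False by simp
  qed
  show "S1 t = S t"
  proof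
    show "S t \<subseteq> S1 t" using mono .
    show "S1 t \<subseteq> S t"
    proof
      fix x assume x: "x \<in> S1 t"
      from srun_grow[OF wf r x] have "x \<in> S t \<or> (t < sm M \<and> x \<in> {..<N})" using v by blast
      then show "x \<in> S t"
      proof
        assume h: "t < sm M \<and> x \<in> {..<N}"
        have "S t \<inter> {..<N} = S1 t \<inter> {..<N}"
          using ceq[of t] h mono[of t] by (intro card_subset_eq) auto
        then show "x \<in> S t" using x h by blast
      qed
    qed
  qed
qed

lemma pigeon:
  fixes S :: "nat \<Rightarrow> nat set"
  assumes "\<forall>t\<ge>m. S t = {}"
  shows "\<exists>i j. i < 2 ^ m + 1 \<and> j < 2 ^ m + 1 \<and> i \<noteq> j \<and> (\<forall>t. i \<in> S t \<longleftrightarrow> j \<in> S t)"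
proof -
  define g :: "nat \<Rightarrow> nat set" where "g x = {t. t < m \<and> x \<in> S t}" for x
  have "\<not> inj_on g {..<2 ^ m + 1::nat}"
  proof
    assume "inj_on g {..<2 ^ m + 1::nat}"
    moreover have "g ` {..<2 ^ m + 1::nat} \<subseteq> Pow {..<m}" by (auto simp: g_def)
    ultimately have "card {..<2 ^ m + 1::nat} \<le> card (Pow {..<m::nat})"
      by (intro card_inj_on_le) auto
    then show False by (simp add: card_Pow)
  qed
  then obtain i j where ij: "i < 2 ^ m + 1" "j < 2 ^ m + 1" "i \<noteq> j" "g i = g j"
    unfolding inj_on_def by blast
  have "\<forall>t. i \<in> S t \<longleftrightarrow> j \<in> S t"
  proof
    fix t show "i \<in> S t \<longleftrightarrow> j \<in> S t"
    proof (cases "t < m")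
      case True then show ?thesis using ij(4) unfolding g_def by blast
    next
      case False then show ?thesis using assms by simp
    qed
  qed
  with ij show ?thesis by blast
qed

lemma srun_empty_high:
  assumes wf: "safa_wf \<Sigma> M" and r: "srun M p S w p' S'" and h: "\<forall>t\<ge>sm M. S t = {}"
  shows "\<forall>t\<ge>sm M. S' t = {}"
  using srun_grow[OF wf r] h by fastforce

lemma main:
  assumes wf: "safa_wf \<Sigma> M" and N: "N = 2 ^ sm M + 1"
  shows "srun M p S (rdp N k) p' S' \<Longrightarrow> Phi (sm M) N S' < Phi (sm M) N S + k \<Longrightarrow>
    (\<forall>t\<ge>sm M. S t = {}) \<Longrightarrow> \<exists>w2 i. i < N \<and> srun M p S w2 p' S' \<and> Suc (cnt i w2) = k"
proof (induction k arbitrary: p S)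
  case 0
  have "Phi (sm M) N S \<le> Phi (sm M) N S'" using srun_mono[OF 0(1)] by (intro Phi_mono)
  with 0(2) show ?case by simp
next
  case (Suc k)
  have "srun M p S (rd N @ rdp N k) p' S'" using Suc.prems(1) by (simp add: rdp_Suc)
  from srun_split[OF this] obtain p1 S1 where
    r1: "srun M p S (rd N) p1 S1" and r2: "srun M p1 S1 (rdp N k) p' S'"
    by blast
  have h1: "\<forall>t\<ge>sm M. S1 t = {}" using srun_empty_high[OF wf r1 Suc.prems(3)] .
  show ?case
  proof (cases "Phi (sm M) N S < Phi (sm M) N S1")
    case True
    then have "Phi (sm M) N S' < Phi (sm M) N S1 + k" using Suc.prems(2) by simp
    from Suc.IH[OF r2 this h1] obtain w2 i where
      w2: "i < N" "srun M p1 S1 w2 p' S'" "Suc (cnt i w2) = k" by blast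
    have "srun M p S (rd N @ w2) p' S'" using srun_app[OF w2(2) r1] .
    moreover have "Suc (cnt i (rd N @ w2)) = Suc k" using w2 by (simp add: cnt_rd)
    ultimately show ?thesis using w2(1) by blast
  next
    case False
    have sr: "snd ` set (rd N) \<subseteq> {..<N}" by (simp add: set_rd)
    have "S1 = S" using Phi_eq[OF wf r1 sr] False by simp
    from pigeon[OF Suc.prems(3)] N obtain i j where
      ij: "i < N" "j < N" "i \<noteq> j" "\<forall>t. i \<in> S t \<longleftrightarrow> j \<in> S t" by auto
    have "srun M p S ((rd N)[i := (fst (rd N ! i), j)]) p1 S1"
      using srun_replace[OF r1 _ _ ij(4), of i] `S1 = S` ij(1) nth_rd[OF ij(1)] by simp
    then have r1': "srun M p S ((rd N)[i := (0, j)]) p1 S1" using nth_rd[OF ij(1)] by simp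
    have "srun M p S ((rd N)[i := (0, j)] @ rdp N k) p' S'" using srun_app[OF r2 r1'] .
    moreover have "Suc (cnt i ((rd N)[i := (0, j)] @ rdp N k)) = Suc k"
      using cnt_rd_upd[OF ij(1,3)] cnt_rdp ij(1) by simp
    ultimately show ?thesis using ij(1) by blast
  qed
qed



definition parA :: cma where
  "parA = \<lparr> cQ = {0, 1}, cq0 = 0, cFl = {0}, cFg = {0},
     cdelta = {(0, 0, None, 1), (1, 0, None, 1), (0, 0, Some 1, 0), (1, 0, Some 1, 0),
               (0, 0, Some 0, 1), (1, 0, Some 0, 1)} \<rparr>"

lemma cnt_snoc: "cnt d' (w @ [(a, d)]) = cnt d' w + (if d' = d then 1 else 0)"
  by (simp add: cnt_def)

lemma par_inv: "cma_reach parA w q f \<Longrightarrow>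
   (\<forall>d. f d = (if cnt d w = 0 then None else Some (cnt d w mod 2))) \<and>
   (w \<noteq> [] \<longrightarrow> q = cnt (snd (last w)) w mod 2)"
proof (induction rule: cma_reach.induct)
  case init then show ?case by simp
next
  case (step w q f a d q')
  have fd: "f d = (if cnt d w = 0 then None else Some (cnt d w mod 2))" using step.IH by blast
  have q': "q' = (cnt d w + 1) mod 2"
    using step.hyps(2) fd by (auto simp: parA_def split: if_splits) presburger+
  show ?case
  proof (intro conjI allI impI)
    fix d'
    show "(f(d \<mapsto> q')) d' = (if cnt d' (w @ [(a, d)]) = 0 then None else Some (cnt d' (w @ [(a, d)]) mod 2))"
      using step.IH q' by (simp add: cnt_snoc del: cnt_app)
    show "q' = cnt (snd (last (w @ [(a, d)]))) (w @ [(a, d)]) mod 2" using q' by (simp add: cnt_snoc del: cnt_app)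
  qed
qed

lemma par_exists: "\<forall>x \<in> set w. fst x = 0 \<Longrightarrow> \<exists>q f. cma_reach parA w q f"
proof (induction w rule: rev_induct)
  case Nil then show ?case using cma_reach.init by blast
next
  case (snoc x w)
  then obtain q f where r: "cma_reach parA w q f" by auto
  obtain a d where x: "x = (a, d)" by (cases x)
  have a: "a = 0" using snoc.prems x by simp
  have fd: "f d = (if cnt d w = 0 then None else Some (cnt d w mod 2))" using par_inv[OF r] by blast
  have q: "q \<in> {0, 1}"
  proof (cases "w = []")
    case True show ?thesis using r True by (cases rule: cma_reach.cases) (auto simp: parA_def)
  next
    case False then show ?thesis using par_inv[OF r] by auto
  qed
  have "(q, a, f d, (cnt d w + 1) mod 2) \<in> cdelta parA"
    using q a fd by (auto simp: parA_def) presburger+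
  from cma_reach.step[OF r this] x show ?case by blast
qed

lemma parA_wf: "cma_wf {0} parA"
  by (auto simp: cma_wf_def parA_def)

lemma w1_in:
  assumes "N > 0" "even R" "R > 0"
  shows "rdp N R \<in> cma_lang parA"
proof -
  have "\<forall>x \<in> set (rdp N R). fst x = 0" by (auto simp: rdp_def rd_def)
  from par_exists[OF this] obtain q f where r: "cma_reach parA (rdp N R) q f" by blast
  have ne: "rdp N R \<noteq> []"
  proof
    assume "rdp N R = []"
    then have "cnt 0 (rdp N R) = 0" by simp
    with assms show False by (simp add: cnt_rdp)
  qed
  have cd: "cnt d (rdp N R) = R" if "d \<in> snd ` set (rdp N R)" for d
  proof -
    have "cnt d (rdp N R) > 0" using that by (simp add: cnt_def)
    then show ?thesis by (simp add: cnt_rdp split: if_splits)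
  qed
  have "q = 0" using par_inv[OF r] ne cd[of "snd (last (rdp N R))"] assms(2) by simp
  moreover have "\<forall>d \<in> snd ` set (rdp N R). \<exists>p \<in> cFl parA. f d = Some p"
    using par_inv[OF r] cd assms by (simp add: parA_def)
  ultimately show ?thesis using r unfolding cma_lang_def by (auto simp: parA_def)
qed

lemma w2_notin:
  assumes "Suc (cnt i w) = R" "even R" "R > 0"
  shows "w \<notin> cma_lang parA"
proof
  assume "w \<in> cma_lang parA"
  then obtain q f where r: "cma_reach parA w q f" and l: "\<forall>d \<in> snd ` set w. \<exists>p \<in> cFl parA. f d = Some p"
    unfolding cma_lang_def by blast
  have c2: "odd (cnt i w)" using assms by auto
  then have c: "cnt i w > 0" "odd (cnt i w)" by (auto simp: odd_pos)
  have "i \<in> snd ` set w" using cnt_pos[OF c(1)] .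
  with l obtain p where "p \<in> cFl parA" "f i = Some p" by blast
  moreover have "f i = Some 1" using par_inv[OF r] c by (simp add: odd_iff_mod_2_eq_one)
  ultimately show False by (simp add: parA_def)
qed

lemma part2: "\<exists>\<Sigma> A. finite \<Sigma> \<and> cma_wf \<Sigma> A \<and> \<not> (\<exists>M. safa_wf \<Sigma> M \<and> safa_lang M = cma_lang A)"
proof (intro exI conjI)
  show "finite {0::nat}" by simp
  show "cma_wf {0} parA" by (rule parA_wf)
  show "\<not> (\<exists>M. safa_wf {0} M \<and> safa_lang M = cma_lang parA)"
  proof
    assume "\<exists>M. safa_wf {0} M \<and> safa_lang M = cma_lang parA"
    then obtain M where wf: "safa_wf {0} M" and L: "safa_lang M = cma_lang parA" by blast
    define N :: nat where "N = 2 ^ sm M + 1"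
    define R :: nat where "R = 2 * (sm M * N + 1)"
    have R: "even R" "R > 0" "N > 0" by (auto simp: R_def N_def)
    have "rdp N R \<in> safa_lang M" using w1_in[OF R(3,1,2)] L by simp
    then obtain q S where r: "safa_reach M (rdp N R) q S" and qF: "q \<in> sF M"
      unfolding safa_lang_def by blast
    have sr: "srun M (sq0 M) (\<lambda>_. {}) (rdp N R) q S" using reach_srun[OF r] .
    have "Phi (sm M) N S < Phi (sm M) N (\<lambda>_. {}) + R"
      using Phi_bound[of "sm M" N S] by (simp add: R_def)
    from main[OF wf N_def sr this] obtain w2 i where
      w2: "srun M (sq0 M) (\<lambda>_. {}) w2 q S" "Suc (cnt i w2) = R" by auto
    have "w2 \<in> safa_lang M" using srun_reach[OF w2(1)] qF unfolding safa_lang_def by blast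
    moreover have "w2 \<notin> cma_lang parA" using w2_notin[OF w2(2) R(1,2)] .
    ultimately show False using L by simp
  qed
qed


theorem corollary2:
  shows "(\<forall>\<Sigma> M. finite \<Sigma> \<and> safa_wf \<Sigma> M \<longrightarrow>
            (\<exists>A. cma_wf \<Sigma> A \<and> cma_lang A = safa_lang M))
       \<and> (\<exists>\<Sigma> A. finite \<Sigma> \<and> cma_wf \<Sigma> A \<and>
            \<not> (\<exists>M. safa_wf \<Sigma> M \<and> safa_lang M = cma_lang A))"
  using part1 part2 by blast

end
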